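(* Consider the Markov decision process with state space $\mathcal X=\{e\}$, action set $\mathcal A_e=\{0,1\}$, transitions $P(e,0,e)=P(e,1,e)=1$, and reward laws $S(e,0,e,\cdot)=\delta_0$, $S(e,1,e,\cdot)=\delta_1$. If $\gamma\in(1/2,1)$, then one can choose the parameters of Algorithm 1 (the deterministic initial function $\hat Q^0$, the initial laws $\nu_k$ and the learning rates $\alpha_k$), with $\varepsilon_k(e)=0$ for all $k\ge0$, such that almost surely, for both $a\in\{0,1\}$, $\sum_{k\ge1}\alpha_k(e,a)\mathbf 1_{\{\tau^{k+1}_{e,a}<\infty\}}=\infty$ and $\sum_{k\ge1}(\alpha_k(e,a))^2\mathbf 1_{\{\tau^{k+1}_{e,a}<\infty\}}<\infty$ (and trivially $\lim_k\varepsilon_k(e)=0$), but $\lim_{k\to\infty}V_{\hat\pi^k}(e)$ almost surely does not exist.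
   Context: General setting: $\mathcal X$ finite state space, finite action sets $\mathcal A_x$, $\mathcal Z=\{(x,a):x\in\mathcal X,a\in\mathcal A_x\}$, transition laws $P(x,a,\cdot)$ on $\mathcal X$, reward laws $S(x,a,y,\cdot)$ on $\mathbb R$ with finite second moment, discount $\gamma\in[0,1)$. For an SM policy $\pi$ (a family of probability measures $\pi(x,\cdot)$ on $\mathcal A_x$) and $x\in\mathcal X$: $X_0=x$, $A_t\sim\pi(X_t,\cdot)$, $X_{t+1}\sim P(X_t,A_t,\cdot)$, and conditionally on the state-action process the rewards $R_{t+1}\sim S(X_t,A_t,X_{t+1},\cdot)$ are independent; $V_\pi(x)=\mathbb E_{x,\pi}[\sum_{t\ge0}\gamma^tR_{t+1}]$. Algorithm 1. Fix a deterministic $\hat Q^0:\mathcal Z\to\mathbb R$. For $k\ge0$, given episodes $i=1,\dots,k$ of the form $(X^i_0,A^i_0,X^i_1,R^i_1,A^i_1,\dots)$, let $\mathcal F^k$ be the $\sigma$-field they generate ($\mathcal F^0$ trivial) and $\mathcal G^i_n=\sigma(X^i_0,A^i_0,X^i_1,R^i_1,A^i_1,\dots,X^i_n,R^i_n,A^i_n)$; suppose $\hat Q^k$ is $\mathcal F^k$-measurable. For some $\mathcal F^k$-measurable $\varepsilon_k:\mathcal X\to[0,1]$ let $\hat\pi^k(x,a)=\frac{\varepsilon_k(x)}{|\mathcal A_x|}+\mathbf 1_{\{a\in\arg\max\hat Q^k(x,\cdot)\}}\frac{1-\varepsilon_k(x)}{|\arg\max\hat Q^k(x,\cdot)|}$.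 For some $\mathcal F^k$-measurable probability $\nu_k$ on $\mathcal Z$, build episode $k+1$ with $(X^{k+1}_0,A^{k+1}_0)\sim\nu_k$ and then policy $\hat\pi^k$. Let $\tau^{k+1}_{x,a}=\inf\{t\ge0:(X^{k+1}_t,A^{k+1}_t)=(x,a)\}$ ($\inf\emptyset=\infty$), $G^{k+1}_{x,a}=\sum_{t\ge0}\gamma^tR^{k+1}_{\tau^{k+1}_{x,a}+t+1}$ (zero if $\tau^{k+1}_{x,a}=\infty$), and for some $\mathcal F^k\vee\mathcal G^{k+1}_{\tau^{k+1}_{x,a}}$-measurable $\alpha_k(x,a)\in[0,1]$ set $\hat Q^{k+1}(x,a)=(1-\alpha_k(x,a)\mathbf 1_{\{\tau^{k+1}_{x,a}<\infty\}})\hat Q^k(x,a)+\alpha_k(x,a)\mathbf 1_{\{\tau^{k+1}_{x,a}<\infty\}}G^{k+1}_{x,a}$. *)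

theory Defs
  imports "HOL-Probability.Probability"
begin

(* The concrete MDP: single state e (left implicit), actions A_e = {0,1} encoded as
   bool (False = action 0, True = action 1), P(e,a,e) = 1, S(e,a,e,.) = delta_a. *)

text \<open>Reward value of action a (the reward law S(e,a,e,.) is the Dirac mass at this value).\<close>
definition rew :: "bool \<Rightarrow> real" where
  "rew a = (if a then 1 else 0)"

text \<open>Value V_pi(e) of an SM policy pi (pi a = pi(e,a)): X_t = e always, actions A_t i.i.d. with
  law pi(e,.), rewards R_{t+1} = rew A_t; V_pi(e) = E[sum_t gamma^t R_{t+1}].\<close>
definition V :: "real \<Rightarrow> (bool \<Rightarrow> real) \<Rightarrow> real" where
  "V \<gamma> \<pi> = (\<integral>\<omega>. (\<Sum>t. \<gamma> ^ t * rew (\<omega> !! t))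
               \<partial>stream_space (measure_pmf (bernoulli_pmf (\<pi> True))))"

definition argmaxQ :: "(bool \<Rightarrow> real) \<Rightarrow> bool set" where
  "argmaxQ Q = {b. \<forall>c. Q c \<le> Q b}"

definition pihat :: "real \<Rightarrow> (bool \<Rightarrow> real) \<Rightarrow> bool \<Rightarrow> real" where
  "pihat \<epsilon> Q a = \<epsilon> / real (card (UNIV :: bool set))
     + (if a \<in> argmaxQ Q then (1 - \<epsilon>) / real (card (argmaxQ Q)) else 0)"

text \<open>Episode i (i >= 1) is given by actions A i t (t >= 0) and rewards R i t (t >= 1).
  hits = [tau^i_{e,a} < infinity], tau = first visit time, Gret = return G^i_{e,a}.\<close>
definition hits :: "(nat \<Rightarrow> nat \<Rightarrow> 'w \<Rightarrow> bool) \<Rightarrow> nat \<Rightarrow> bool \<Rightarrow> 'w \<Rightarrow> bool" where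
  "hits A i a \<omega> = (\<exists>t. A i t \<omega> = a)"

definition tau :: "(nat \<Rightarrow> nat \<Rightarrow> 'w \<Rightarrow> bool) \<Rightarrow> nat \<Rightarrow> bool \<Rightarrow> 'w \<Rightarrow> nat" where
  "tau A i a \<omega> = (LEAST t. A i t \<omega> = a)"

definition visit :: "(nat \<Rightarrow> nat \<Rightarrow> 'w \<Rightarrow> bool) \<Rightarrow> nat \<Rightarrow> bool \<Rightarrow> 'w \<Rightarrow> real" where
  "visit A i a \<omega> = (if hits A i a \<omega> then 1 else 0)"

definition Gret :: "(nat \<Rightarrow> nat \<Rightarrow> 'w \<Rightarrow> bool) \<Rightarrow> (nat \<Rightarrow> nat \<Rightarrow> 'w \<Rightarrow> real) \<Rightarrow> real
                     \<Rightarrow> nat \<Rightarrow> bool \<Rightarrow> 'w \<Rightarrow> real" where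
  "Gret A R \<gamma> i a \<omega> = (if hits A i a \<omega>
      then (\<Sum>t. \<gamma> ^ t * R i (tau A i a \<omega> + t + 1) \<omega>) else 0)"

text \<open>The iterates Q-hat^k of Algorithm 1 (alpha k a = alpha_k(e,a), episode k+1 = Suc k).\<close>
primrec Qhat :: "(bool \<Rightarrow> real) \<Rightarrow> (nat \<Rightarrow> bool \<Rightarrow> 'w \<Rightarrow> real) \<Rightarrow> (nat \<Rightarrow> nat \<Rightarrow> 'w \<Rightarrow> bool)
                 \<Rightarrow> (nat \<Rightarrow> nat \<Rightarrow> 'w \<Rightarrow> real) \<Rightarrow> real \<Rightarrow> nat \<Rightarrow> 'w \<Rightarrow> bool \<Rightarrow> real" where
  "Qhat Q0 \<alpha> A R \<gamma> 0 \<omega> a = Q0 a"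
| "Qhat Q0 \<alpha> A R \<gamma> (Suc k) \<omega> a =
     (1 - \<alpha> k a \<omega> * visit A (Suc k) a \<omega>) * Qhat Q0 \<alpha> A R \<gamma> k \<omega> a
     + \<alpha> k a \<omega> * visit A (Suc k) a \<omega> * Gret A R \<gamma> (Suc k) a \<omega>"

definition gen :: "'w measure \<Rightarrow> ('w \<Rightarrow> real) set \<Rightarrow> 'w measure" where
  "gen M fs = sigma (space M) (\<Union>f\<in>fs. {f -` B \<inter> space M | B. B \<in> sets borel})"

definition actv :: "(nat \<Rightarrow> nat \<Rightarrow> 'w \<Rightarrow> bool) \<Rightarrow> nat \<Rightarrow> nat \<Rightarrow> 'w \<Rightarrow> real" where
  "actv A i t = (\<lambda>\<omega>. if A i t \<omega> then 1 else 0)"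

text \<open>Generators of F^k: episodes 1..k (the states are constant and generate nothing).\<close>
definition Fgen :: "(nat \<Rightarrow> nat \<Rightarrow> 'w \<Rightarrow> bool) \<Rightarrow> (nat \<Rightarrow> nat \<Rightarrow> 'w \<Rightarrow> real) \<Rightarrow> nat \<Rightarrow> ('w \<Rightarrow> real) set" where
  "Fgen A R k = {actv A i t | i t. 1 \<le> i \<and> i \<le> k} \<union> {R i t | i t. 1 \<le> i \<and> i \<le> k \<and> 1 \<le> t}"

text \<open>F^k \<or> sigma(X^{k+1}_0, A^{k+1}_0, ..., A^{k+1}_{t-1}, X^{k+1}_t, R^{k+1}_1..R^{k+1}_t):
  the information available when A^{k+1}_t is drawn.\<close>
definition Hgen :: "(nat \<Rightarrow> nat \<Rightarrow> 'w \<Rightarrow> bool) \<Rightarrow> (nat \<Rightarrow> nat \<Rightarrow> 'w \<Rightarrow> real) \<Rightarrow> nat \<Rightarrow> nat \<Rightarrow> ('w \<Rightarrow> real) set" where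
  "Hgen A R k t = Fgen A R k \<union> {actv A (Suc k) s | s. s < t} \<union> {R (Suc k) s | s. 1 \<le> s \<and> s \<le> t}"

definition Ggen :: "(nat \<Rightarrow> nat \<Rightarrow> 'w \<Rightarrow> bool) \<Rightarrow> (nat \<Rightarrow> nat \<Rightarrow> 'w \<Rightarrow> real) \<Rightarrow> nat \<Rightarrow> nat \<Rightarrow> ('w \<Rightarrow> real) set" where
  "Ggen A R k n = Fgen A R k \<union> {actv A (Suc k) s | s. s \<le> n} \<union> {R (Suc k) s | s. 1 \<le> s \<and> s \<le> n}"

definition Ginf :: "(nat \<Rightarrow> nat \<Rightarrow> 'w \<Rightarrow> bool) \<Rightarrow> (nat \<Rightarrow> nat \<Rightarrow> 'w \<Rightarrow> real) \<Rightarrow> nat \<Rightarrow> ('w \<Rightarrow> real) set" where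
  "Ginf A R k = Fgen A R k \<union> {actv A (Suc k) s | s. True} \<union> {R (Suc k) s | s. 1 \<le> s}"

text \<open>M, A, R realize Algorithm 1 on the MDP above with discount gamma, initial function Q0,
  initial laws nu_k = (1 - p k) delta_{(e,0)} + p k delta_{(e,1)}, learning rates alpha and
  exploration rates eps.\<close>
definition algorithm1 ::
  "'w measure \<Rightarrow> (nat \<Rightarrow> nat \<Rightarrow> 'w \<Rightarrow> bool) \<Rightarrow> (nat \<Rightarrow> nat \<Rightarrow> 'w \<Rightarrow> real) \<Rightarrow> real
   \<Rightarrow> (bool \<Rightarrow> real) \<Rightarrow> (nat \<Rightarrow> 'w \<Rightarrow> real) \<Rightarrow> (nat \<Rightarrow> bool \<Rightarrow> 'w \<Rightarrow> real) \<Rightarrow> (nat \<Rightarrow> 'w \<Rightarrow> real) \<Rightarrow> bool"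
where
  "algorithm1 M A R \<gamma> Q0 p \<alpha> eps \<longleftrightarrow>
     prob_space M
   \<and> (\<forall>i t. 1 \<le> i \<longrightarrow> A i t \<in> measurable M (count_space UNIV))
   \<and> (\<forall>i t. 1 \<le> i \<longrightarrow> R i t \<in> borel_measurable M)
   \<comment> \<open>exploration rates eps_k: F^k-measurable, values in [0,1]\<close>
   \<and> (\<forall>k. eps k \<in> borel_measurable (gen M (Fgen A R k)))
   \<and> (\<forall>k. \<forall>\<omega>\<in>space M. 0 \<le> eps k \<omega> \<and> eps k \<omega> \<le> 1)
   \<comment> \<open>initial laws nu_k: F^k-measurable probabilities on Z\<close>
   \<and> (\<forall>k. p k \<in> borel_measurable (gen M (Fgen A R k)))
   \<and> (\<forall>k. \<forall>\<omega>\<in>space M. 0 \<le> p k \<omega> \<and> p k \<omega> \<le> 1)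
   \<comment> \<open>learning rates alpha_k(e,a): F^k \<or> G^{k+1}_{tau}-measurable, values in [0,1]\<close>
   \<and> (\<forall>k a. \<alpha> k a \<in> borel_measurable (gen M (Ginf A R k)))
   \<and> (\<forall>k a n. (\<lambda>\<omega>. indicator {\<omega>. hits A (Suc k) a \<omega> \<and> tau A (Suc k) a \<omega> = n} \<omega> * \<alpha> k a \<omega>)
                \<in> borel_measurable (gen M (Ggen A R k n)))
   \<and> (\<forall>k a. \<forall>\<omega>\<in>space M. 0 \<le> \<alpha> k a \<omega> \<and> \<alpha> k a \<omega> \<le> 1)
   \<comment> \<open>(X^{k+1}_0, A^{k+1}_0) ~ nu_k conditionally on F^k\<close>
   \<and> (\<forall>k b. \<forall>E\<in>sets (gen M (Fgen A R k)).
        measure M (E \<inter> {\<omega>\<in>space M. A (Suc k) 0 \<omega> = b})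
          = (\<integral>\<omega>. indicator E \<omega> * (if b then p k \<omega> else 1 - p k \<omega>) \<partial>M))
   \<comment> \<open>A^{k+1}_t ~ pihat^k(X^{k+1}_t, .) conditionally on the past, t \<ge> 1\<close>
   \<and> (\<forall>k t b. 1 \<le> t \<longrightarrow> (\<forall>E\<in>sets (gen M (Hgen A R k t)).
        measure M (E \<inter> {\<omega>\<in>space M. A (Suc k) t \<omega> = b})
          = (\<integral>\<omega>. indicator E \<omega> * pihat (eps k \<omega>) (Qhat Q0 \<alpha> A R \<gamma> k \<omega>) b \<partial>M)))
   \<comment> \<open>R^{i}_{t+1} ~ S(e, A^i_t, e, .) = Dirac(rew A^i_t)\<close>
   \<and> (\<forall>i t. 1 \<le> i \<longrightarrow> (AE \<omega> in M. R i (Suc t) \<omega> = rew (A i t \<omega>)))"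

end

theory Submission
  imports Defs
begin


lemma V_const:
  assumes pi: "\<pi> True = (if b then 1 else 0)" and g: "0 \<le> \<gamma>" "\<gamma> < 1"
  shows "V \<gamma> \<pi> = (if b then 1/(1-\<gamma>) else 0)"
proof -
  let ?p = "bernoulli_pmf (if b then 1 else 0)"
  have sp: "set_pmf ?p = {b}"
    by (cases b; auto simp: set_pmf_iff; case_tac x; simp)
  have ae: "AE \<omega> in stream_space (measure_pmf ?p). stream_all (\<lambda>x. x = b) \<omega>"
    by (rule prob_space.AE_stream_all[OF prob_space_measure_pmf]) (auto simp: AE_measure_pmf_iff sp)
  have "V \<gamma> \<pi> = (\<integral>\<omega>. (\<Sum>t. \<gamma> ^ t * rew b) \<partial>stream_space (measure_pmf ?p))"
    unfolding V_def pi
    apply (rule integral_cong_AE)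
      apply measurable
    using ae proof (rule eventually_mono)
    fix w :: "bool stream" assume "stream_all (\<lambda>x. x = b) w"
    then have "\<And>t. w !! t = b" by (simp add: stream_all_def snth_in)
    then show "(\<Sum>t. \<gamma> ^ t * rew (w !! t)) = (\<Sum>t. \<gamma> ^ t * rew b)" by simp
  qed
  also have "\<dots> = (\<Sum>t. \<gamma> ^ t * rew b)"
    using prob_space.prob_space[OF prob_space.prob_space_stream_space[OF prob_space_measure_pmf[of ?p]]] by simp
  also have "\<dots> = (if b then 1/(1-\<gamma>) else 0)"
    using g by (auto simp: rew_def suminf_geometric)
  finally show ?thesis .
qed


definition gg :: "real \<Rightarrow> real" where "gg \<gamma> = \<gamma> / (1 - \<gamma>)"
definition mm :: "real \<Rightarrow> real" where "mm \<gamma> = min 1 (gg \<gamma> - 1)"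
definition hh :: "real \<Rightarrow> nat \<Rightarrow> real" where "hh \<gamma> k = mm \<gamma> / 2 / (real k + 1)"
definition qq :: "real \<Rightarrow> nat \<Rightarrow> real" where
  "qq \<gamma> k = (if even k then 1 - hh \<gamma> k else 1 + hh \<gamma> k)"
definition al0 :: "real \<Rightarrow> nat \<Rightarrow> real" where
  "al0 \<gamma> k = (if even k then (qq \<gamma> (Suc k) - qq \<gamma> k) / (gg \<gamma> - qq \<gamma> k)
              else (qq \<gamma> k - qq \<gamma> (Suc k)) / qq \<gamma> k)"

lemma gg_gt: assumes "1/2 < \<gamma>" "\<gamma> < 1" shows "gg \<gamma> > 1"
  using assms by (simp add: gg_def field_simps)

lemma mm_props: assumes "1/2 < \<gamma>" "\<gamma> < 1"
  shows "0 < mm \<gamma>" "mm \<gamma> \<le> 1" "mm \<gamma> \<le> gg \<gamma> - 1"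
  using gg_gt[OF assms] by (auto simp: mm_def)

lemma frac_bounds:
  fixes h h' D G m :: real
  assumes "0 < h'" "h' \<le> h" "h \<le> m/2" "0 < m" "m \<le> D" "m \<le> 1" "D + h \<le> G" "0 < G"
  shows "0 \<le> (h + h') / (D + h)" "(h + h') / (D + h) \<le> 1"
        "(h + h') / (D + h) \<le> 2 * h / m" "h / G \<le> (h + h') / (D + h)"
proof -
  have D: "0 < D + h" using assms by linarith
  show "0 \<le> (h + h') / (D + h)" using assms D by simp
  show "(h + h') / (D + h) \<le> 1" using assms D by (simp add: divide_le_eq)
  have "(h + h') / (D + h) \<le> (2*h) / (D + h)" using assms D by (simp add: divide_right_mono)
  also have "\<dots> \<le> 2 * h / m" using assms D by (intro divide_left_mono) (auto intro: mult_pos_pos)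
  finally show "(h + h') / (D + h) \<le> 2 * h / m" .
  have "h / G \<le> h / (D + h)" using assms D by (intro divide_left_mono) auto
  also have "\<dots> \<le> (h + h') / (D + h)" using assms D by (simp add: divide_right_mono)
  finally show "h / G \<le> (h + h') / (D + h)" .
qed

lemma al0_bounds:
  assumes "1/2 < \<gamma>" "\<gamma> < 1"
  shows "0 \<le> al0 \<gamma> k" "al0 \<gamma> k \<le> 1" "al0 \<gamma> k \<le> 1 / (real k + 1)"
        "mm \<gamma> / 2 / (gg \<gamma> + 2) / (real k + 1) \<le> al0 \<gamma> k"
proof -
  note m = mm_props[OF assms] and g = gg_gt[OF assms]
  define h where "h = hh \<gamma> k"
  define h' where "h' = hh \<gamma> (Suc k)"
  have hpos: "0 < h'" using m by (simp add: h'_def hh_def)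
  have hh': "h' \<le> h" using m by (simp add: h'_def h_def hh_def frac_le)
  have hm: "h \<le> mm \<gamma> / 2" using m by (simp add: h_def hh_def divide_le_eq)
  have e: "2 * h / mm \<gamma> = 1 / (real k + 1)"
  proof -
    have "mm \<gamma> * 2 + real k * (mm \<gamma> * 2) > 0" using m(1) by (simp add: add_pos_nonneg)
    then show ?thesis using m by (simp add: h_def hh_def field_simps)
  qed
  have e2: "h / (gg \<gamma> + 2) = mm \<gamma> / 2 / (gg \<gamma> + 2) / (real k + 1)" by (simp add: h_def hh_def algebra_simps)
  have "(if even k then
      (h + h') / ((gg \<gamma> - 1) + h) else (h + h') / (1 + h)) = al0 \<gamma> k"
    by (simp add: al0_def qq_def h_def h'_def algebra_simps)
  moreover have "0 \<le> (h + h') / ((gg \<gamma> - 1) + h) \<and> (h + h') / ((gg \<gamma> - 1) + h) \<le> 1 \<and>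
     (h + h') / ((gg \<gamma> - 1) + h) \<le> 2 * h / mm \<gamma> \<and> h / (gg \<gamma> + 2) \<le> (h + h') / ((gg \<gamma> - 1) + h)"
    using frac_bounds[OF hpos hh' hm m(1) m(3) m(2), of "gg \<gamma> + 2"] m g hm by linarith
  moreover have "0 \<le> (h + h') / (1 + h) \<and> (h + h') / (1 + h) \<le> 1 \<and>
     (h + h') / (1 + h) \<le> 2 * h / mm \<gamma> \<and> h / (gg \<gamma> + 2) \<le> (h + h') / (1 + h)"
    using frac_bounds[OF hpos hh' hm m(1) _ m(2), of 1 "gg \<gamma> + 2"] m g hm by linarith
  ultimately show "0 \<le> al0 \<gamma> k" "al0 \<gamma> k \<le> 1" "al0 \<gamma> k \<le> 1 / (real k + 1)"
        "mm \<gamma> / 2 / (gg \<gamma> + 2) / (real k + 1) \<le> al0 \<gamma> k"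
    unfolding e e2 by (auto split: if_splits)
qed

lemma harmonic_shift: assumes "c > 0" shows "\<not> summable (\<lambda>k. c / (real k + real n))"
proof
  assume s: "summable (\<lambda>k. c / (real k + real n))"
  have "summable (\<lambda>k. (1/c) * (c / (real k + real n)))" using s by (rule summable_mult)
  then have "summable (\<lambda>k. inverse (real (k + n)))" using assms by (simp add: field_simps)
  then have "summable (\<lambda>k. inverse (real k))"
    using summable_iff_shift[of "\<lambda>k. inverse (real k)" n] by simp
  then show False using not_summable_harmonic by blast
qed

lemma sq_summable: "summable (\<lambda>k. (1 / (real k + real n))^2)"
proof -
  have "summable (\<lambda>k. inverse (real (k + n) ^ 2))"
    using summable_iff_shift[of "\<lambda>k. inverse (real k ^ 2)" n] inverse_power_summable[of 2] by simp
  then show ?thesis by (simp add: power_one_over field_simps)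
qed


definition Aex :: "nat \<Rightarrow> nat \<Rightarrow> (nat \<Rightarrow> real) \<Rightarrow> bool" where
  "Aex i t \<omega> = (if t = 0 then even i else odd i)"
definition Rex :: "nat \<Rightarrow> nat \<Rightarrow> (nat \<Rightarrow> real) \<Rightarrow> real" where
  "Rex i t \<omega> = (if t = 0 then 0 else rew (Aex i (t - 1) \<omega>))"
definition Q0ex :: "real \<Rightarrow> bool \<Rightarrow> real" where
  "Q0ex \<gamma> a = (if a then 1 else qq \<gamma> 0)"
definition alex :: "real \<Rightarrow> nat \<Rightarrow> bool \<Rightarrow> (nat \<Rightarrow> real) \<Rightarrow> real" where
  "alex \<gamma> k a \<omega> = (if a then (if odd k then 1 / (real k + 1) else 0) else al0 \<gamma> k)"
definition pex :: "nat \<Rightarrow> (nat \<Rightarrow> real) \<Rightarrow> real" where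
  "pex k \<omega> = (if odd k then 1 else 0)"

lemma hits_ex: "hits Aex (Suc k) a \<omega>"
  unfolding hits_def Aex_def
  by (rule exI[of _ "if a = odd k then 0 else 1"]) auto

lemma visit_ex: "visit Aex (Suc k) a \<omega> = 1"
  by (simp add: visit_def hits_ex)

lemma tau_ex: "tau Aex (Suc k) a \<omega> = (if a = odd k then 0 else 1)"
  unfolding tau_def Aex_def
  by (rule Least_equality) (auto split: if_splits)

lemma geo_tail: fixes \<gamma> :: real assumes "0 \<le> \<gamma>" "\<gamma> < 1"
  shows "(\<Sum>t. \<gamma> ^ t * (if t = 0 then 0 else 1)) = \<gamma> / (1 - \<gamma>)"
proof -
  have "(\<lambda>t. \<gamma> * \<gamma> ^ t) sums (\<gamma> * (1 / (1 - \<gamma>)))"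
  proof -
    have "norm \<gamma> < 1" using assms by simp
    from sums_mult[OF geometric_sums[OF this], of \<gamma>] show ?thesis by simp
  qed
  then have "(\<lambda>t. \<gamma> ^ Suc t * (if Suc t = 0 then 0 else 1)) sums (\<gamma> / (1 - \<gamma>))" by simp
  then have "(\<lambda>t. \<gamma> ^ t * (if t = 0 then 0 else 1)) sums (\<gamma> / (1 - \<gamma>) + 0)"
    by (subst (asm) sums_Suc_iff) simp
  then show ?thesis by (simp add: sums_iff)
qed

lemma Gret_even: assumes "0 \<le> \<gamma>" "\<gamma> < 1" "even k"
  shows "Gret Aex Rex \<gamma> (Suc k) False \<omega> = gg \<gamma>"
proof -
  have "Gret Aex Rex \<gamma> (Suc k) False \<omega> = (\<Sum>t. \<gamma> ^ t * (if t = 0 then 0 else 1))"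
    using assms apply (simp add: Gret_def hits_ex tau_ex Rex_def Aex_def)
    apply (rule arg_cong[where f=suminf]) apply (rule ext) apply (simp add: rew_def)
    done
  then show ?thesis using geo_tail[OF assms(1,2)] by (simp add: gg_def)
qed

lemma Gret_odd1: assumes "odd k"
  shows "Gret Aex Rex \<gamma> (Suc k) True \<omega> = 1"
proof -
  have "Gret Aex Rex \<gamma> (Suc k) True \<omega> = (\<Sum>t. if t = 0 then 1 else 0)"
    using assms apply (simp add: Gret_def hits_ex tau_ex Rex_def Aex_def)
    apply (rule arg_cong[where f=suminf]) apply (rule ext) apply (simp add: rew_def)
    done
  also have "\<dots> = 1" using sums_single[of 0 "\<lambda>_. 1::real"] by (simp add: sums_iff)
  finally show ?thesis .
qed

lemma Gret_odd0: assumes "odd k"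
  shows "Gret Aex Rex \<gamma> (Suc k) False \<omega> = 0"
  using assms by (simp add: Gret_def hits_ex tau_ex Rex_def Aex_def rew_def)

lemma Qhat_ex: assumes "1/2 < \<gamma>" "\<gamma> < 1"
  shows "Qhat (Q0ex \<gamma>) (alex \<gamma>) Aex Rex \<gamma> k \<omega> = (\<lambda>a. if a then 1 else qq \<gamma> k)"
proof (induction k)
  case 0
  then show ?case by (auto simp: Q0ex_def)
next
  case (Suc k)
  have g: "gg \<gamma> > 1" using gg_gt[OF assms] .
  have h: "0 < hh \<gamma> k" using mm_props[OF assms] by (simp add: hh_def)
  show ?case
  proof (cases "even k")
    case True
    have d: "gg \<gamma> - qq \<gamma> k \<noteq> 0" using g h True by (simp add: qq_def)
    show ?thesis
      unfolding Qhat.simps Suc using True assms d by (auto simp: visit_ex alex_def Gret_even al0_def field_simps)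
  next
    case False
    have d: "qq \<gamma> k \<noteq> 0" using h False by (simp add: qq_def)
    show ?thesis
      unfolding Qhat.simps Suc using False d by (auto simp: visit_ex alex_def Gret_odd0 Gret_odd1 al0_def field_simps)
  qed
qed
theorem proposition2p4:
  fixes \<gamma> :: real
  assumes "1/2 < \<gamma>" and "\<gamma> < 1"
  shows "\<exists>(M :: (nat \<Rightarrow> real) measure) A R Q0 p \<alpha>.
           algorithm1 M A R \<gamma> Q0 p \<alpha> (\<lambda>k \<omega>. 0)
         \<and> (AE \<omega> in M.
              (\<forall>a. \<not> summable (\<lambda>k. \<alpha> (Suc k) a \<omega> * visit A (Suc (Suc k)) a \<omega>)
                 \<and> summable (\<lambda>k. (\<alpha> (Suc k) a \<omega>)\<^sup>2 * visit A (Suc (Suc k)) a \<omega>))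
            \<and> \<not> convergent (\<lambda>k. V \<gamma> (pihat 0 (Qhat Q0 \<alpha> A R \<gamma> k \<omega>))))"
proof -
  define M :: "(nat \<Rightarrow> real) measure" where "M = return (count_space UNIV) (\<lambda>_. 0)"
  have psM: "prob_space M" unfolding M_def by (rule prob_space_return) simp
  have QH: "\<And>k \<omega>. Qhat (Q0ex \<gamma>) (alex \<gamma>) Aex Rex \<gamma> k \<omega> = (\<lambda>a. if a then 1 else qq \<gamma> k)"
    using Qhat_ex[OF assms] .
  have h: "\<And>k. 0 < hh \<gamma> k" using mm_props[OF assms] by (simp add: hh_def)
  have am: "\<And>k. argmaxQ (\<lambda>a. if a then 1 else qq \<gamma> k) = {even k}"
    using h by (auto simp: argmaxQ_def qq_def) (smt (verit))+
  have pih: "\<And>k b. pihat 0 (\<lambda>a. if a then 1 else qq \<gamma> k) b = (if b = even k then 1 else 0)"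
    by (simp add: pihat_def am)
  have meas_gen: "\<And>E fs c. measure M (E \<inter> {\<omega>\<in>space M. c = b}) = (\<integral>\<omega>. indicator E \<omega> * (if b = c then 1 else 0) \<partial>M)" for b
    by auto
  have alg: "algorithm1 M Aex Rex \<gamma> (Q0ex \<gamma>) pex (alex \<gamma>) (\<lambda>k \<omega>. 0)"
    unfolding algorithm1_def
  proof (intro conjI allI impI ballI)
    show "prob_space M" by (rule psM)
  next
    fix i t show "Aex i t \<in> measurable M (count_space UNIV)"
      unfolding Aex_def by simp
  next
    fix i t show "Rex i t \<in> borel_measurable M"
      unfolding Rex_def Aex_def by simp
  next
    fix k show "pex k \<in> borel_measurable (gen M (Fgen Aex Rex k))" unfolding pex_def by simp
  next
    fix k \<omega> assume "\<omega> \<in> space M" show "0 \<le> pex k \<omega>" "pex k \<omega> \<le> 1" by (auto simp: pex_def)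
  next
    fix k a show "alex \<gamma> k a \<in> borel_measurable (gen M (Ginf Aex Rex k))" unfolding alex_def by simp
  next
    fix k a n
    show "(\<lambda>\<omega>. indicator {\<omega>. hits Aex (Suc k) a \<omega> \<and> tau Aex (Suc k) a \<omega> = n} \<omega> * alex \<gamma> k a \<omega>)
                \<in> borel_measurable (gen M (Ggen Aex Rex k n))"
      unfolding alex_def by (simp add: hits_ex tau_ex indicator_def)
  next
    fix k a \<omega> assume "\<omega> \<in> space M"
    show "0 \<le> alex \<gamma> k a \<omega>" "alex \<gamma> k a \<omega> \<le> 1"
      using al0_bounds[OF assms, of k] by (auto simp: alex_def)
  next
    fix k b E
    show "measure M (E \<inter> {\<omega>\<in>space M. Aex (Suc k) 0 \<omega> = b})
          = (\<integral>\<omega>. indicator E \<omega> * (if b then pex k \<omega> else 1 - pex k \<omega>) \<partial>M)"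
    proof -
      have "(\<lambda>\<omega>. indicator E \<omega> * (if b then pex k \<omega> else 1 - pex k \<omega>)) = (\<lambda>\<omega>. indicator E \<omega> * (if odd k = b then 1 else 0))"
        by (auto simp: pex_def)
      then show ?thesis by (cases "odd k = b") (auto simp: Aex_def)
    qed
  next
    fix k b E and t :: nat assume "1 \<le> t"
    show "measure M (E \<inter> {\<omega>\<in>space M. Aex (Suc k) t \<omega> = b})
          = (\<integral>\<omega>. indicator E \<omega> * pihat ((\<lambda>k \<omega>. 0) k \<omega>) (Qhat (Q0ex \<gamma>) (alex \<gamma>) Aex Rex \<gamma> k \<omega>) b \<partial>M)"
      using \<open>1 \<le> t\<close> by (cases "even k = b") (auto simp: Aex_def QH pih)
  next
    fix i t show "AE \<omega> in M. Rex i (Suc t) \<omega> = rew (Aex i t \<omega>)"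
      by (simp add: Rex_def)
  qed simp_all
  have s0: "\<not> summable (\<lambda>k. alex \<gamma> (Suc k) False \<omega> * visit Aex (Suc (Suc k)) False \<omega>)" for \<omega>
  proof
    assume "summable (\<lambda>k. alex \<gamma> (Suc k) False \<omega> * visit Aex (Suc (Suc k)) False \<omega>)"
    then have s: "summable (\<lambda>k. al0 \<gamma> (Suc k))" by (simp add: alex_def visit_ex)
    have c: "mm \<gamma> / 2 / (gg \<gamma> + 2) > 0" using mm_props[OF assms] gg_gt[OF assms] by simp
    have "summable (\<lambda>k. (mm \<gamma> / 2 / (gg \<gamma> + 2)) / (real k + real (2::nat)))"
    proof (rule summable_comparison_test'[OF s, of 0])
      fix k :: nat
      show "norm ((mm \<gamma> / 2 / (gg \<gamma> + 2)) / (real k + real (2::nat))) \<le> al0 \<gamma> (Suc k)"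
        using al0_bounds(4)[OF assms, of "Suc k"] c mm_props(1)[OF assms] gg_gt[OF assms]
        by (simp add: add.commute abs_mult)
    qed
    then show False using harmonic_shift[OF c, of 2] by simp
  qed
  have s1: "\<not> summable (\<lambda>k. alex \<gamma> (Suc k) True \<omega> * visit Aex (Suc (Suc k)) True \<omega>)" for \<omega>
  proof
    define f where "f = (\<lambda>k. alex \<gamma> (Suc k) True \<omega> * visit Aex (Suc (Suc k)) True \<omega>)"
    assume "summable (\<lambda>k. alex \<gamma> (Suc k) True \<omega> * visit Aex (Suc (Suc k)) True \<omega>)"
    then have sf: "summable f" by (simp add: f_def)
    then have "summable (\<lambda>k. f (Suc k))" by (simp add: summable_Suc_iff)
    with sf have s2: "summable (\<lambda>k. f k + f (Suc k))" by (rule summable_add)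
    have "summable (\<lambda>k. 1 / (real k + real (3::nat)))"
    proof (rule summable_comparison_test'[OF s2, of 0])
      fix k :: nat
      show "norm (1 / (real k + real (3::nat))) \<le> f k + f (Suc k)"
        by (auto simp: f_def alex_def visit_ex frac_le)
    qed
    then show False using harmonic_shift[of 1 3] by simp
  qed
  have q: "summable (\<lambda>k. (alex \<gamma> (Suc k) a \<omega>)\<^sup>2 * visit Aex (Suc (Suc k)) a \<omega>)" for a \<omega>
  proof (rule summable_comparison_test'[OF sq_summable[of 2], of 0])
    fix k :: nat
    have b: "0 \<le> alex \<gamma> (Suc k) a \<omega>" "alex \<gamma> (Suc k) a \<omega> \<le> 1 / (real k + real (2::nat))"
      using al0_bounds[OF assms, of "Suc k"] by (auto simp: alex_def add.commute)
    then show "norm ((alex \<gamma> (Suc k) a \<omega>)\<^sup>2 * visit Aex (Suc (Suc k)) a \<omega>) \<le> (1 / (real k + real (2::nat)))\<^sup>2"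
      by (simp add: visit_ex power_mono)
  qed
  have Vk: "V \<gamma> (pihat 0 (Qhat (Q0ex \<gamma>) (alex \<gamma>) Aex Rex \<gamma> k \<omega>)) = (if even k then 1/(1-\<gamma>) else 0)" for k \<omega>
    using V_const[of _ "even k" \<gamma>] assms by (simp add: QH pih)
  have nc: "\<not> convergent (\<lambda>k. V \<gamma> (pihat 0 (Qhat (Q0ex \<gamma>) (alex \<gamma>) Aex Rex \<gamma> k \<omega>)))" for \<omega>
  proof
    define X where "X = (\<lambda>k. V \<gamma> (pihat 0 (Qhat (Q0ex \<gamma>) (alex \<gamma>) Aex Rex \<gamma> k \<omega>)))"
    assume "convergent (\<lambda>k. V \<gamma> (pihat 0 (Qhat (Q0ex \<gamma>) (alex \<gamma>) Aex Rex \<gamma> k \<omega>)))"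
    then obtain L where L: "X \<longlonglongrightarrow> L" by (auto simp: convergent_def X_def)
    then have "(\<lambda>k. X (Suc k)) \<longlonglongrightarrow> L" by (rule LIMSEQ_Suc)
    with L have "(\<lambda>k. \<bar>X k - X (Suc k)\<bar>) \<longlonglongrightarrow> \<bar>L - L\<bar>" by (intro tendsto_intros)
    moreover have "(\<lambda>k. \<bar>X k - X (Suc k)\<bar>) = (\<lambda>k. 1/(1-\<gamma>))"
      using assms by (auto simp: X_def Vk)
    ultimately have "1/(1-\<gamma>) = (0::real)" using LIMSEQ_unique by fastforce
    then show False using assms by simp
  qed
  show ?thesis
    apply (rule exI[of _ M], rule exI[of _ Aex], rule exI[of _ Rex], rule exI[of _ "Q0ex \<gamma>"],
           rule exI[of _ pex], rule exI[of _ "alex \<gamma>"])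
    apply (intro conjI alg AE_I2 allI)
    subgoal for \<omega> a using s0[of \<omega>] s1[of \<omega>] by (cases a) simp_all
    subgoal for \<omega> a using q by simp
    subgoal for \<omega> using nc by simp
    done
qed


end
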